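(* For $\alpha>0$ let $\kappa(\alpha)=3\,\frac{2\alpha+1}{2\alpha+3}$ be the kurtosis of the Beta$(\alpha,\alpha)$ law. For $\alpha_1,\alpha_2>0$, $\kappa(\alpha_1)\le\kappa(\alpha_2)$ if and only if $F_{\alpha_1}\preceq_{\text{ssd}}F_{\alpha_2}$.
   Context: $F_\alpha$ denotes the distribution function of the symmetric Beta$(\alpha,\alpha)$ law on $[0,1]$. $F_1\preceq_{\text{ssd}}F_2$ means $\int_0^xF_2(t)dt\le\int_0^xF_1(t)dt$ for all $x\in[0,1]$. *)

theory Defs
  imports "HOL-Analysis.Analysis"
begin

definition beta_sym_density :: "real \<Rightarrow> real \<Rightarrow> real" where
  "beta_sym_density \<alpha> t =
     (if 0 \<le> t \<and> t \<le> 1 then t powr (\<alpha> - 1) * (1 - t) powr (\<alpha> - 1) / Beta \<alpha> \<alpha> else 0)"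

definition beta_sym_cdf :: "real \<Rightarrow> real \<Rightarrow> real" where
  "beta_sym_cdf \<alpha> x = integral {0..x} (beta_sym_density \<alpha>)"

definition beta_kurtosis :: "real \<Rightarrow> real" where
  "beta_kurtosis \<alpha> = 3 * (2 * \<alpha> + 1) / (2 * \<alpha> + 3)"

definition ssd_le :: "(real \<Rightarrow> real) \<Rightarrow> (real \<Rightarrow> real) \<Rightarrow> bool" where
  "ssd_le F1 F2 \<longleftrightarrow> (\<forall>x\<in>{0..1}. integral {0..x} F2 \<le> integral {0..x} F1)"

end

theory Submission
  imports Defs
begin

lemma integral_reflect1:
  "integral {a..b} (\<lambda>t. h (1 - t)) = integral {1-b..1-a} (h::real\<Rightarrow>real)"
proof -
  have "integral {a..b} (\<lambda>t. h (1 - t)) = integral {-b..-a} (\<lambda>y. h (y + 1))"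
    using Henstock_Kurzweil_Integration.integral_reflect_real[of "-a" "-b" "\<lambda>y. h (y + 1)"] by (simp add: add.commute)
  also have "\<dots> = integral {(1-b)-1..(1-a)-1} (\<lambda>y. h (y + 1))" by simp
  also have "\<dots> = integral {1-b..1-a} h" by (rule integral_shift_real_ivl)
  finally show ?thesis .
qed

definition g :: "real \<Rightarrow> real \<Rightarrow> real" where
  "g a t = t powr (a - 1) * (1 - t) powr (a - 1)"

lemma Beta_pos: "a > 0 \<Longrightarrow> Beta a a > (0::real)"
  unfolding Beta_def by (intro divide_pos_pos mult_pos_pos Gamma_real_pos) auto

lemma g_int: "a > 0 \<Longrightarrow> 0 \<le> u \<Longrightarrow> v \<le> 1 \<Longrightarrow> g a integrable_on {u..v}"
  unfolding g_def
  by (rule integrable_on_subinterval[OF integrable_Beta'[of a a]]) auto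

lemma g_nonneg: "0 \<le> g a t" unfolding g_def by simp

lemma dens_eq: "t \<in> {0..1} \<Longrightarrow> beta_sym_density a t = g a t / Beta a a"
  unfolding beta_sym_density_def g_def by simp

lemma dens_sym: "beta_sym_density a (1 - t) = beta_sym_density a t"
  unfolding beta_sym_density_def by (auto simp: mult.commute)

lemma dens_int: "a > 0 \<Longrightarrow> 0 \<le> u \<Longrightarrow> v \<le> 1 \<Longrightarrow> beta_sym_density a integrable_on {u..v}"
proof -
  assume *: "a > 0" "0 \<le> u" "v \<le> 1"
  have "(\<lambda>t. g a t / Beta a a) integrable_on {u..v}"
    using g_int[OF *] by (rule integrable_on_divide)
  then show ?thesis
    by (rule integrable_eq) (use * in \<open>auto simp: dens_eq\<close>)
qed

lemma cdf_eq: "a > 0 \<Longrightarrow> 0 \<le> x \<Longrightarrow> x \<le> 1 \<Longrightarrow> beta_sym_cdf a x = integral {0..x} (g a) / Beta a a"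
proof -
  assume *: "a > 0" "0 \<le> x" "x \<le> 1"
  have "beta_sym_cdf a x = integral {0..x} (\<lambda>t. g a t / Beta a a)"
    unfolding beta_sym_cdf_def using * by (intro integral_cong) (auto simp: dens_eq)
  also have "\<dots> = integral {0..x} (g a) / Beta a a" by simp
  finally show ?thesis .
qed

lemma cdf_1: "a > 0 \<Longrightarrow> beta_sym_cdf a 1 = 1"
proof -
  assume a: "a > 0"
  have "integral {0..1} (g a) = Beta a a"
    using has_integral_Beta_real[OF a a] unfolding g_def by (simp add: integral_unique)
  then show ?thesis using cdf_eq[OF a] Beta_pos[OF a] by simp
qed

lemma cdf_refl: "a > 0 \<Longrightarrow> 0 \<le> x \<Longrightarrow> x \<le> 1 \<Longrightarrow> beta_sym_cdf a (1 - x) = 1 - beta_sym_cdf a x"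
proof -
  assume *: "a > 0" "0 \<le> x" "x \<le> 1"
  have "beta_sym_cdf a (1 - x) = integral {1-1..1-x} (beta_sym_density a)"
    unfolding beta_sym_cdf_def by simp
  also have "\<dots> = integral {x..1} (\<lambda>t. beta_sym_density a (1 - t))"
    by (rule integral_reflect1[symmetric])
  also have "\<dots> = integral {x..1} (beta_sym_density a)" by (simp add: dens_sym)
  also have "\<dots> = 1 - beta_sym_cdf a x"
    using Henstock_Kurzweil_Integration.integral_combine[OF *(2,3) dens_int[OF *(1), of 0 1]] cdf_1[OF *(1)]
    unfolding beta_sym_cdf_def by simp
  finally show ?thesis .
qed

lemma cdf_half: "a > 0 \<Longrightarrow> beta_sym_cdf a (1/2) = 1/2"
  using cdf_refl[of a "1/2"] by simp

lemma cdf_cont: "a > 0 \<Longrightarrow> continuous_on {0..1} (beta_sym_cdf a)"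
  unfolding beta_sym_cdf_def
  by (rule indefinite_integral_continuous_1, rule dens_int) auto

lemma g_split: "0 \<le> t \<Longrightarrow> t \<le> 1 \<Longrightarrow> g b t = g a t * (t * (1 - t)) powr (b - a)"
proof -
  assume t: "0 \<le> t" "t \<le> 1"
  show ?thesis
  proof (cases "t = 0 \<or> t = 1")
    case True then show ?thesis unfolding g_def by auto
  next
    case False
    then have t': "0 < t" "0 < 1 - t" using t by auto
    have "g a t * (t * (1 - t)) powr (b - a) =
        (t powr (a - 1) * t powr (b - a)) * ((1 - t) powr (a - 1) * (1 - t) powr (b - a))"
      unfolding g_def using t' by (simp add: powr_mult)
    also have "\<dots> = g b t" unfolding g_def using t' by (simp add: powr_add[symmetric])
    finally show ?thesis by simp
  qed
qed

lemma tt_mono: "0 \<le> (t::real) \<Longrightarrow> t \<le> x \<Longrightarrow> x \<le> 1/2 \<Longrightarrow> t * (1 - t) \<le> x * (1 - x)"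
proof -
  assume "0 \<le> t" "t \<le> x" "x \<le> 1/2"
  then have "0 \<le> (x - t) * (1 - x - t)" by (intro mult_nonneg_nonneg) auto
  then show ?thesis by (simp add: algebra_simps)
qed

lemma core:
  assumes a: "0 < a" and ab: "a \<le> b" and x: "0 \<le> x" "x \<le> 1/2"
  defines "r \<equiv> (x * (1 - x)) powr (b - a) * Beta a a / Beta b b"
  shows "beta_sym_cdf b x \<le> r * beta_sym_cdf a x"
    and "r * (1/2 - beta_sym_cdf a x) \<le> 1/2 - beta_sym_cdf b x"
    and "beta_sym_cdf a x \<le> 1/2" and "0 \<le> beta_sym_cdf a x"
proof -
  have b: "0 < b" using a ab by simp
  define \<rho> where "\<rho> = (x * (1 - x)) powr (b - a)"
  have r: "r = \<rho> * Beta a a / Beta b b" unfolding r_def \<rho>_def by simp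
  have Ba: "Beta a a > 0" by (rule Beta_pos[OF a])
  have Bb: "Beta b b > 0" by (rule Beta_pos[OF b])
  have rho0: "\<rho> \<ge> 0" unfolding \<rho>_def by simp
  have mono: "(t * (1 - t)) powr (b - a) \<le> \<rho>" if "0 \<le> t" "t \<le> x" for t
    unfolding \<rho>_def using that x ab
    by (intro powr_mono2 tt_mono) auto
  have mono2: "\<rho> \<le> (t * (1 - t)) powr (b - a)" if "x \<le> t" "t \<le> 1/2" for t
    unfolding \<rho>_def using that x ab
    by (intro powr_mono2 tt_mono) auto
  define Ia where "Ia = integral {0..x} (g a)"
  define Ib where "Ib = integral {0..x} (g b)"
  define Ja where "Ja = integral {x..1/2} (g a)"
  define Jb where "Jb = integral {x..1/2} (g b)"
  have sumA: "Ia + Ja = Beta a a / 2"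
  proof -
    have "Ia + Ja = integral {0..1/2} (g a)" unfolding Ia_def Ja_def
      by (rule Henstock_Kurzweil_Integration.integral_combine) (use x g_int[OF a] in auto)
    also have "\<dots> = Beta a a / 2" using cdf_eq[OF a, of "1/2"] cdf_half[OF a] Ba by simp
    finally show ?thesis .
  qed
  have sumB: "Ib + Jb = Beta b b / 2"
  proof -
    have "Ib + Jb = integral {0..1/2} (g b)" unfolding Ib_def Jb_def
      by (rule Henstock_Kurzweil_Integration.integral_combine) (use x g_int[OF b] in auto)
    also have "\<dots> = Beta b b / 2" using cdf_eq[OF b, of "1/2"] cdf_half[OF b] Bb by simp
    finally show ?thesis .
  qed
  have I: "Ib \<le> \<rho> * Ia"
  proof -
    have "Ib \<le> integral {0..x} (\<lambda>t. \<rho> * g a t)" unfolding Ib_def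
    proof (rule integral_le)
      show "g b integrable_on {0..x}" using g_int[OF b] x by auto
      show "(\<lambda>t. \<rho> * g a t) integrable_on {0..x}" using g_int[OF a, of 0 x] x by (intro integrable_on_mult_right) auto
      fix t assume t: "t \<in> {0..x}"
      then have "g b t = g a t * (t * (1 - t)) powr (b - a)" using x by (intro g_split) auto
      also have "\<dots> \<le> g a t * \<rho>" using mono[of t] t by (intro mult_left_mono g_nonneg) auto
      finally show "g b t \<le> \<rho> * g a t" by (simp add: mult.commute)
    qed
    also have "\<dots> = \<rho> * Ia" unfolding Ia_def by simp
    finally show ?thesis .
  qed
  have J: "\<rho> * Ja \<le> Jb"
  proof -
    have "integral {x..1/2} (\<lambda>t. \<rho> * g a t) \<le> Jb" unfolding Jb_def
    proof (rule integral_le)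
      show "g b integrable_on {x..1/2}" using g_int[OF b] x by auto
      show "(\<lambda>t. \<rho> * g a t) integrable_on {x..1/2}" using g_int[OF a, of x "1/2"] x by (intro integrable_on_mult_right) auto
      fix t assume t: "t \<in> {x..1/2}"
      have "\<rho> * g a t = g a t * \<rho>" by simp
      also have "\<dots> \<le> g a t * (t * (1 - t)) powr (b - a)" using mono2[of t] t by (intro mult_left_mono g_nonneg) auto
      also have "\<dots> = g b t" using x t by (intro g_split[symmetric]) auto
      finally show "\<rho> * g a t \<le> g b t" .
    qed
    moreover have "integral {x..1/2} (\<lambda>t. \<rho> * g a t) = \<rho> * Ja" unfolding Ja_def by simp
    ultimately show ?thesis by linarith
  qed
  have Ia0: "0 \<le> Ia" unfolding Ia_def by (rule integral_nonneg) (use g_int[OF a] x g_nonneg in auto)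
  have Ja0: "0 \<le> Ja" unfolding Ja_def by (rule integral_nonneg) (use g_int[OF a] x g_nonneg in auto)
  have Fa: "beta_sym_cdf a x = Ia / Beta a a" unfolding Ia_def using cdf_eq[OF a] x by simp
  have Fb: "beta_sym_cdf b x = Ib / Beta b b" unfolding Ib_def using cdf_eq[OF b] x by simp
  show "beta_sym_cdf b x \<le> r * beta_sym_cdf a x"
    unfolding Fa Fb r using I Ba Bb by (simp add: field_simps)
  have hA: "1/2 - beta_sym_cdf a x = Ja / Beta a a" using sumA Fa Ba by (simp add: field_simps)
  note hA
  moreover have "1/2 - beta_sym_cdf b x = Jb / Beta b b" using sumB Fb Bb by (simp add: field_simps)
  moreover have "r * (Ja / Beta a a) = \<rho> * Ja / Beta b b" unfolding r using Ba by simp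
  moreover have "\<rho> * Ja / Beta b b \<le> Jb / Beta b b" using J Bb by (simp add: divide_right_mono)
  ultimately show "r * (1/2 - beta_sym_cdf a x) \<le> 1/2 - beta_sym_cdf b x" by simp
  have "0 \<le> Ja / Beta a a" using Ja0 Ba by simp
  then show "beta_sym_cdf a x \<le> 1/2" using hA by linarith
  show "0 \<le> beta_sym_cdf a x" using Fa Ba Ia0 by simp
qed


lemma cdf_le: "0 < a \<Longrightarrow> a \<le> b \<Longrightarrow> 0 \<le> x \<Longrightarrow> x \<le> 1/2 \<Longrightarrow> beta_sym_cdf b x \<le> beta_sym_cdf a x"
proof -
  assume *: "0 < a" "a \<le> b" "0 \<le> x" "x \<le> 1/2"
  define r where "r = (x * (1 - x)) powr (b - a) * Beta a a / Beta b b"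
  note c = core[OF *, folded r_def]
  show ?thesis
  proof (cases "r \<le> 1")
    case True
    have "r * beta_sym_cdf a x \<le> 1 * beta_sym_cdf a x" using True c(4) by (intro mult_right_mono) auto
    then show ?thesis using c(1) by simp
  next
    case False
    have "1 * (1/2 - beta_sym_cdf a x) \<le> r * (1/2 - beta_sym_cdf a x)"
      using False c(3) by (intro mult_right_mono) auto
    then show ?thesis using c(2) by simp
  qed
qed

lemma g_cont: "0 < x \<Longrightarrow> x \<le> 1/2 \<Longrightarrow> continuous_on {x/2..x} (g a)"
  unfolding g_def by (intro continuous_intros) auto

lemma g_pos: "0 < t \<Longrightarrow> t < 1 \<Longrightarrow> 0 < g a t"
  unfolding g_def by simp

lemma cdf_pos: "0 < a \<Longrightarrow> 0 < x \<Longrightarrow> x \<le> 1/2 \<Longrightarrow> 0 < beta_sym_cdf a x"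
proof -
  assume a: "0 < a" and x: "0 < x" "x \<le> 1/2"
  have i: "g a integrable_on {x/2..x}" using g_int[OF a] x by auto
  have pos: "0 < integral {x/2..x} (g a)"
  proof (rule ccontr)
    assume "\<not> ?thesis"
    moreover have "0 \<le> integral {x/2..x} (g a)" by (rule integral_nonneg[OF i g_nonneg])
    ultimately have "integral {x/2..x} (g a) = 0" by simp
    then have "(g a has_integral 0) (cbox (x/2) x)" using i by (metis integrable_integral interval_cbox)
    from has_integral_0_cbox_imp_0[OF _ _ this, of x] g_cont[OF x, of a] x g_nonneg
    have "g a x = 0" by auto
    with g_pos[of x a] x show False by simp
  qed
  have "integral {0..x/2} (g a) + integral {x/2..x} (g a) = integral {0..x} (g a)"
    by (rule Henstock_Kurzweil_Integration.integral_combine) (use x g_int[OF a] in auto)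
  moreover have "0 \<le> integral {0..x/2} (g a)"
    by (rule integral_nonneg) (use x g_int[OF a] g_nonneg in auto)
  ultimately have "0 < integral {0..x} (g a)" using pos by linarith
  then show ?thesis using cdf_eq[OF a, of x] x Beta_pos[OF a] by simp
qed

lemma cdf_strict: "0 < a \<Longrightarrow> a < b \<Longrightarrow> \<exists>x0. 0 < x0 \<and> x0 \<le> 1/4 \<and> beta_sym_cdf b x0 < beta_sym_cdf a x0"
proof -
  assume a: "0 < a" and ab: "a < b"
  define c where "c = Beta b b / Beta a a"
  define d where "d = b - a"
  have Ba: "Beta a a > 0" using Beta_pos[OF a] .
  have Bb: "Beta b b > 0" using Beta_pos[of b] a ab by simp
  have c: "c > 0" unfolding c_def using Ba Bb by simp
  have d: "d > 0" unfolding d_def using ab by simp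
  define y where "y = min (1/4) (c powr (1/d) / 2)"
  have y: "0 < y" "y \<le> 1/4" unfolding y_def using c by auto
  have "y * (1 - y) \<le> y" using y by (simp add: mult_left_le)
  also have "\<dots> < c powr (1/d)"
  proof -
    have "0 < c powr (1/d)" using c by simp
    then show ?thesis unfolding y_def by linarith
  qed
  finally have lt: "y * (1 - y) < c powr (1/d)" .
  have "(y * (1 - y)) powr d < (c powr (1/d)) powr d"
    using lt y d by (intro powr_less_mono2) auto
  also have "\<dots> = c" using d c by (simp add: powr_powr)
  finally have rho: "(y * (1 - y)) powr d < c" .
  define r where "r = (y * (1 - y)) powr (b - a) * Beta a a / Beta b b"
  have r: "r < 1" unfolding r_def using rho Ba Bb unfolding c_def d_def
    by (simp add: field_simps)
  note cc = core[OF a less_imp_le[OF ab], of y, folded r_def]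
  have Fpos: "0 < beta_sym_cdf a y" using cdf_pos[OF a] y by simp
  have "beta_sym_cdf b y \<le> r * beta_sym_cdf a y" using cc y by simp
  also have "\<dots> < 1 * beta_sym_cdf a y" using r Fpos by (intro mult_strict_right_mono) auto
  finally show ?thesis using y by (intro exI[of _ y]) auto
qed

lemma cdf_int: "0 < a \<Longrightarrow> 0 \<le> u \<Longrightarrow> v \<le> 1 \<Longrightarrow> beta_sym_cdf a integrable_on {u..v}"
  by (rule integrable_on_subinterval[OF integrable_continuous_interval[OF cdf_cont]]) auto

lemma H_tail: "0 < a \<Longrightarrow> 0 \<le> x \<Longrightarrow> x \<le> 1 \<Longrightarrow>
  integral {x..1} (beta_sym_cdf a) = (1 - x) - integral {0..1-x} (beta_sym_cdf a)"
proof -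
  assume *: "0 < a" "0 \<le> x" "x \<le> 1"
  have "integral {x..1} (beta_sym_cdf a) = integral {0..1-x} (\<lambda>s. beta_sym_cdf a (1 - s))"
    using integral_reflect1[of 0 "1-x" "beta_sym_cdf a"] by simp
  also have "\<dots> = integral {0..1-x} (\<lambda>s. 1 - beta_sym_cdf a s)"
    using * by (intro integral_cong cdf_refl) auto
  also have "\<dots> = integral {0..1-x} (\<lambda>s. 1) - integral {0..1-x} (beta_sym_cdf a)"
    by (rule integral_diff) (use * cdf_int[OF *(1)] in auto)
  also have "\<dots> = (1 - x) - integral {0..1-x} (beta_sym_cdf a)" using * by simp
  finally show ?thesis .
qed

lemma H_formula: "0 < a \<Longrightarrow> 1/2 \<le> x \<Longrightarrow> x \<le> 1 \<Longrightarrow>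
  integral {0..x} (beta_sym_cdf a) = x - 1/2 + integral {0..1-x} (beta_sym_cdf a)"
proof -
  assume *: "0 < a" "1/2 \<le> x" "x \<le> 1"
  have "integral {0..1/2} (beta_sym_cdf a) + integral {1/2..1} (beta_sym_cdf a) = integral {0..1} (beta_sym_cdf a)"
    by (rule Henstock_Kurzweil_Integration.integral_combine) (use cdf_int[OF *(1)] in auto)
  moreover have "integral {0..x} (beta_sym_cdf a) + integral {x..1} (beta_sym_cdf a) = integral {0..1} (beta_sym_cdf a)"
    by (rule Henstock_Kurzweil_Integration.integral_combine) (use * cdf_int[OF *(1)] in auto)
  moreover note H_tail[OF *(1), of "1/2"] H_tail[OF *(1), of x]
  ultimately show ?thesis using * by simp
qed

lemma Hle: "0 < a \<Longrightarrow> a \<le> b \<Longrightarrow> 0 \<le> y \<Longrightarrow> y \<le> 1/2 \<Longrightarrow>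
  integral {0..y} (beta_sym_cdf b) \<le> integral {0..y} (beta_sym_cdf a)"
  by (rule integral_le) (auto intro!: cdf_int cdf_le)

lemma kurt_iff: "0 < a \<Longrightarrow> 0 < b \<Longrightarrow> beta_kurtosis a \<le> beta_kurtosis b \<longleftrightarrow> a \<le> b"
  unfolding beta_kurtosis_def by (simp add: divide_le_eq le_divide_eq field_simps)

theorem corollary4:
  fixes \<alpha>1 \<alpha>2 :: real
  assumes "\<alpha>1 > 0" and "\<alpha>2 > 0"
  shows "beta_kurtosis \<alpha>1 \<le> beta_kurtosis \<alpha>2 \<longleftrightarrow>
         ssd_le (beta_sym_cdf \<alpha>1) (beta_sym_cdf \<alpha>2)"
proof -
  have "\<alpha>1 \<le> \<alpha>2 \<longleftrightarrow> ssd_le (beta_sym_cdf \<alpha>1) (beta_sym_cdf \<alpha>2)"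
  proof
    assume le: "\<alpha>1 \<le> \<alpha>2"
    show "ssd_le (beta_sym_cdf \<alpha>1) (beta_sym_cdf \<alpha>2)"
      unfolding ssd_le_def
    proof
      fix x :: real assume x: "x \<in> {0..1}"
      show "integral {0..x} (beta_sym_cdf \<alpha>2) \<le> integral {0..x} (beta_sym_cdf \<alpha>1)"
      proof (cases "x \<le> 1/2")
        case True then show ?thesis using Hle[OF assms(1) le] x by auto
      next
        case False
        then show ?thesis using Hle[OF assms(1) le, of "1-x"] x
          H_formula[OF assms(1), of x] H_formula[OF assms(2), of x] by auto
      qed
    qed
  next
    assume ssd: "ssd_le (beta_sym_cdf \<alpha>1) (beta_sym_cdf \<alpha>2)"
    show "\<alpha>1 \<le> \<alpha>2"
    proof (rule ccontr)
      assume "\<not> \<alpha>1 \<le> \<alpha>2"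
      then have lt: "\<alpha>2 < \<alpha>1" by simp
      obtain x0 where x0: "0 < x0" "x0 \<le> 1/4" "beta_sym_cdf \<alpha>1 x0 < beta_sym_cdf \<alpha>2 x0"
        using cdf_strict[OF assms(2) lt] by blast
      define D where "D = (\<lambda>t. beta_sym_cdf \<alpha>2 t - beta_sym_cdf \<alpha>1 t)"
      have Dnn: "0 \<le> D t" if "t \<in> {0..1/2}" for t
        unfolding D_def using cdf_le[OF assms(2) less_imp_le[OF lt]] that by auto
      have Dint: "D integrable_on {0..1/2}" unfolding D_def
        by (intro integrable_diff cdf_int assms) auto
      have Dcont: "continuous_on (cbox 0 (1/2)) D" unfolding D_def
        by (intro continuous_intros continuous_on_subset[OF cdf_cont] assms) auto
      have "integral {0..1/2} D = integral {0..1/2} (beta_sym_cdf \<alpha>2) - integral {0..1/2} (beta_sym_cdf \<alpha>1)"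
        unfolding D_def by (rule integral_diff) (auto intro!: cdf_int assms)
      also have "\<dots> \<le> 0" using ssd unfolding ssd_le_def by auto
      finally have "integral {0..1/2} D \<le> 0" .
      moreover have "0 \<le> integral {0..1/2} D" by (rule integral_nonneg[OF Dint Dnn])
      ultimately have "integral {0..1/2} D = 0" by simp
      then have "(D has_integral 0) (cbox 0 (1/2))" using Dint by (metis integrable_integral interval_cbox)
      from has_integral_0_cbox_imp_0[OF Dcont _ this, of x0] Dnn x0
      have "D x0 = 0" by auto
      with x0 show False unfolding D_def by simp
    qed
  qed
  then show ?thesis using kurt_iff[OF assms] by simp
qed

end
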